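(* Let $I$ be a finite set with $|I|=n$. The linear map $\mathcal G:\mathbf M[I]\to\mathbb R[U_\alpha:\alpha\in\{0,1\}^n]$, $$\mathcal G(M)=\sum_{\ell}U_{\mathrm{rkjump}_M(\ell)},$$ summing over all linear orders $\ell=(\ell_1,\dots,\ell_n)$ of $I$, is a strong valuation on matroids: there is a linear map $\hat{\mathcal G}$ on the span of indicator functions of matroid polytopes of matroids on $I$ with $\mathcal G(M)=\hat{\mathcal G}(\mathbb 1_{P(M)})$ for every matroid $M$ on $I$.
   Context: A matroid $M$ on $I$ is a nonempty collection of subsets of $I$ (bases) satisfying the basis exchange axiom; its rank function is $\operatorname{rk}(J)=\max_B|J\cap B|$ over bases $B$. $\mathbf M[I]$ is the vector space with basis the matroids on $I$; $P(M)=\operatorname{conv}\{\sum_{b\in B}e_b: B\text{ a basis}\}$. For a linear order $\ell=(\ell_1,\dots,\ell_n)$ of $I$, $\mathrm{rkjump}_M(\ell)\in\{0,1\}^n$ has $i$-th entry $\operatorname{rk}(\{\ell_1,\dots,\ell_i\})-\operatorname{rk}(\{\ell_1,\dots,\ell_{i-1}\})$. The $U_\alpha$ are independent commuting variables indexed by $\{0,1\}^n$. *)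

theory Defs
  imports "HOL-Analysis.Analysis" "HOL-Library.Poly_Mapping"
begin

text \<open>Matroids on the ground set I, where I is taken to be the finite type 'a
  (i.e. I = UNIV). A matroid is given by its nonempty set of bases satisfying
  the basis exchange axiom.\<close>

definition is_matroid :: "'a set set \<Rightarrow> bool" where
  "is_matroid \<B> \<longleftrightarrow> \<B> \<noteq> {} \<and>
     (\<forall>B1\<in>\<B>. \<forall>B2\<in>\<B>. \<forall>x\<in>B1 - B2. \<exists>y\<in>B2 - B1. insert y (B1 - {x}) \<in> \<B>)"

definition mrank :: "'a set set \<Rightarrow> 'a set \<Rightarrow> nat" where
  "mrank \<B> J = Max ((\<lambda>B. card (J \<inter> B)) ` \<B>)"

definition linear_orders :: "'a::finite list set" where
  "linear_orders = {l. distinct l \<and> set l = UNIV}"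

definition rkjump :: "'a set set \<Rightarrow> 'a list \<Rightarrow> nat list" where
  "rkjump \<B> l = map (\<lambda>i. mrank \<B> (set (take (Suc i) l)) - mrank \<B> (set (take i l))) [0..<length l]"

definition ind_vec :: "'a::finite set \<Rightarrow> real ^ 'a" where
  "ind_vec B = (\<chi> i. if i \<in> B then 1 else 0)"

definition matroid_polytope :: "'a::finite set set \<Rightarrow> (real ^ 'a) set" where
  "matroid_polytope \<B> = convex hull (ind_vec ` \<B>)"

text \<open>The polynomial ring R[U_alpha] as finitely supported maps from monomials
  (finitely supported exponent vectors on the index type) to coefficients.\<close>

type_synonym 'v mpoly = "('v \<Rightarrow>\<^sub>0 nat) \<Rightarrow>\<^sub>0 real"

definition Var :: "'v \<Rightarrow> 'v mpoly" where
  "Var v = Poly_Mapping.single (Poly_Mapping.single v 1) 1"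

definition Const :: "real \<Rightarrow> 'v mpoly" where
  "Const c = Poly_Mapping.single 0 c"

definition G :: "'a::finite set set \<Rightarrow> nat list mpoly" where
  "G \<B> = (\<Sum>l\<in>linear_orders. Var (rkjump \<B> l))"

definition fspan :: "('x \<Rightarrow> real) set \<Rightarrow> ('x \<Rightarrow> real) set" where
  "fspan S = {(\<lambda>x. \<Sum>f\<in>F. c f * f x) | F c. finite F \<and> F \<subseteq> S}"

definition linear_on_fspan :: "('x \<Rightarrow> real) set \<Rightarrow> (('x \<Rightarrow> real) \<Rightarrow> 'v mpoly) \<Rightarrow> bool" where
  "linear_on_fspan V h \<longleftrightarrow>
     (\<forall>f\<in>V. \<forall>g\<in>V. h (\<lambda>x. f x + g x) = h f + h g) \<and>
     (\<forall>c. \<forall>f\<in>V. h (\<lambda>x. c * f x) = Const c * h f)"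

end

theory Submission imports Defs begin

lemma real_cc_mem:
  fixes S :: "real set"
  assumes "compact S" "convex S" "S \<noteq> {}"
  shows "t \<in> S \<longleftrightarrow> Inf S \<le> t \<and> t \<le> Sup S"
proof -
  have b: "bounded S" using assms compact_imp_bounded by auto
  have ba: "bdd_above S" "bdd_below S" using b bounded_imp_bdd_above bounded_imp_bdd_below by auto
  have cl: "closed S" using assms compact_imp_closed by auto
  have i: "Inf S \<in> S" "Sup S \<in> S" using closed_contains_Inf closed_contains_Sup ba cl assms(3) by auto
  have iv: "is_interval S" using assms(2) is_interval_convex_1 by auto
  show ?thesis
  proof
    assume "t \<in> S" thus "Inf S \<le> t \<and> t \<le> Sup S" using ba by (simp add: cInf_lower cSup_upper)
  next
    assume "Inf S \<le> t \<and> t \<le> Sup S"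
    thus "t \<in> S" using iv i unfolding is_interval_1 by blast
  qed
qed

lemma one_dim:
  fixes S :: "'i \<Rightarrow> real set" and c :: "'i \<Rightarrow> real"
  assumes fin: "finite I" and cc: "\<forall>i\<in>I. compact (S i) \<and> convex (S i)"
  and rel: "\<forall>t. (\<Sum>i\<in>I. c i * (if t \<in> S i then 1 else 0)) = 0"
  shows "(\<Sum>i\<in>I. c i * (if S i = {} then 0 else 1)) = 0"
proof -
  define N where "N = {i\<in>I. S i \<noteq> {}}"
  have finN: "finite N" using fin N_def by auto
  have mem: "\<And>i t. i \<in> N \<Longrightarrow> t \<in> S i \<longleftrightarrow> Inf (S i) \<le> t \<and> t \<le> Sup (S i)"
    using real_cc_mem cc N_def by auto
  have key: "(\<Sum>i\<in>{i\<in>N. Sup (S i) = t0}. c i) = 0" for t0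
  proof -
    define E where "E = {e \<in> (\<lambda>i. Inf (S i)) ` N \<union> (\<lambda>i. Sup (S i)) ` N. t0 < e}"
    have finE: "finite E" using finN E_def by auto
    define s where "s = (if E = {} then t0 + 1 else (t0 + Min E) / 2)"
    have s1: "t0 < s"
    proof (cases "E = {}")
      case True thus ?thesis by (simp add: s_def)
    next
      case False
      have "Min E \<in> E" using False finE by auto
      hence "t0 < Min E" using E_def by auto
      thus ?thesis using False s_def by auto
    qed
    have s2: "\<And>e. e \<in> E \<Longrightarrow> s < e"
    proof -
      fix e assume e: "e \<in> E"
      hence ne: "E \<noteq> {}" by auto
      have "Min E \<le> e" using e finE by auto
      moreover have "Min E \<in> E" using ne finE by auto
      hence "t0 < Min E" using E_def by auto
      ultimately show "s < e" using ne s_def by auto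
    qed
    have pt: "(if t0 \<in> S i then 1 else 0) - (if s \<in> S i then 1 else 0)
        = (if i \<in> N \<and> Sup (S i) = t0 then 1 else (0::real))" if iI: "i \<in> I" for i
    proof (cases "i \<in> N")
      case False
      hence "S i = {}" using iI N_def by auto
      thus ?thesis using False by auto
    next
      case True
      note m = mem[OF True]
      show ?thesis
      proof (cases "Sup (S i) = t0")
        case True
        have "Inf (S i) \<le> Sup (S i)" proof -
          obtain x where "x \<in> S i" using \<open>i\<in>N\<close> N_def by auto
          thus ?thesis using m by auto
        qed
        thus ?thesis using m True s1 \<open>i\<in>N\<close> by auto
      next
        case F: False
        show ?thesis
        proof (cases "Sup (S i) < t0")
          case True thus ?thesis using m s1 F by auto
        next
          case False
          hence "Sup (S i) \<in> E" using F \<open>i\<in>N\<close> E_def by auto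
          hence sb: "s < Sup (S i)" using s2 by auto
          show ?thesis
          proof (cases "t0 < Inf (S i)")
            case True
            hence "Inf (S i) \<in> E" using \<open>i\<in>N\<close> E_def by auto
            hence "s < Inf (S i)" using s2 by auto
            thus ?thesis using m True F by auto
          next
            case False
            thus ?thesis using m sb s1 F by auto
          qed
        qed
      qed
    qed
    have "0 = (\<Sum>i\<in>I. c i * (if t0 \<in> S i then 1 else 0)) - (\<Sum>i\<in>I. c i * (if s \<in> S i then 1 else 0))"
      using rel by simp
    also have "\<dots> = (\<Sum>i\<in>I. c i * ((if t0 \<in> S i then 1 else 0) - (if s \<in> S i then 1 else 0)))"
      by (simp add: sum_subtractf right_diff_distrib)
    also have "\<dots> = (\<Sum>i\<in>I. c i * (if i \<in> N \<and> Sup (S i) = t0 then 1 else 0))"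
      using pt by (intro sum.cong) auto
    also have "\<dots> = (\<Sum>i\<in>{i\<in>N. Sup (S i) = t0}. c i)"
    proof -
      have "(\<Sum>i\<in>I. c i * (if i \<in> N \<and> Sup (S i) = t0 then 1 else 0))
          = (\<Sum>i\<in>I. if i \<in> {i\<in>N. Sup (S i) = t0} then c i else 0)"
        by (intro sum.cong) auto
      also have "\<dots> = (\<Sum>i\<in>{i\<in>N. Sup (S i) = t0}. c i)"
        using fin by (subst sum.If_cases) (auto simp: N_def intro!: sum.cong)
      finally show ?thesis .
    qed
    finally show ?thesis by simp
  qed
  have "(\<Sum>i\<in>I. c i * (if S i = {} then 0 else 1)) = (\<Sum>i\<in>N. c i)"
  proof -
    have "(\<Sum>i\<in>I. c i * (if S i = {} then 0 else 1)) = (\<Sum>i\<in>I. if i \<in> N then c i else 0)"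
      by (intro sum.cong) (auto simp: N_def)
    also have "\<dots> = (\<Sum>i\<in>N. c i)" using fin by (subst sum.If_cases) (auto simp: N_def intro!: sum.cong)
    finally show ?thesis .
  qed
  also have "\<dots> = (\<Sum>y\<in>(\<lambda>i. Sup (S i)) ` N. \<Sum>i\<in>{i\<in>N. Sup (S i) = y}. c i)"
    using finN by (subst sum.group[symmetric, of N _ "\<lambda>i. Sup (S i)"]) auto
  also have "\<dots> = 0" using key by simp
  finally show ?thesis .
qed


lemma euler_aux:
  fixes K :: "'i \<Rightarrow> (real^'n) set" and c :: "'i \<Rightarrow> real" and D :: "'n set"
  assumes "finite D"
  shows "finite I \<Longrightarrow> \<forall>i\<in>I. compact (K i) \<and> convex (K i) \<and> K i \<subseteq> {x. \<forall>j. j \<notin> D \<longrightarrow> x$j = a$j}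
    \<Longrightarrow> \<forall>x. (\<Sum>i\<in>I. c i * indicator (K i) x) = 0
    \<Longrightarrow> (\<Sum>i\<in>I. c i * (if K i = {} then 0 else 1)) = 0"
  using assms(1)
proof (induction D arbitrary: a K rule: finite_induct)
  case empty
  have sub: "K i \<subseteq> {a}" if "i \<in> I" for i
    using empty(2) that by (auto simp: vec_eq_iff subset_iff)
  have "(\<Sum>i\<in>I. c i * (if K i = {} then 0 else 1)) = (\<Sum>i\<in>I. c i * indicator (K i) a)"
  proof (intro sum.cong refl)
    fix i assume "i \<in> I"
    hence "K i = {} \<or> K i = {a}" using sub by blast
    thus "c i * (if K i = {} then 0 else 1) = c i * indicator (K i) a" by auto
  qed
  also have "\<dots> = 0" using empty(3) by simp
  finally show ?case .
next
  case (insert k D)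
  have slice: "(\<Sum>i\<in>I. c i * (if t \<in> (\<lambda>x. x$k) ` K i then 1 else 0)) = 0" for t
  proof -
    define a' :: "real^'n" where "a' = (\<chi> j. if j = k then t else a$j)"
    define K' where "K' i = K i \<inter> {x. x$k = t}" for i
    have cl: "closed {x::real^'n. x$k = t}" by (intro closed_Collect_eq continuous_intros)
    have cv: "convex {x::real^'n. x$k = t}" by (auto simp: convex_def simp flip: distrib_right)
    have h1: "\<forall>i\<in>I. compact (K' i) \<and> convex (K' i) \<and> K' i \<subseteq> {x. \<forall>j. j \<notin> D \<longrightarrow> x$j = a'$j}"
    proof
      fix i assume i: "i \<in> I"
      note ki = bspec[OF insert.prems(2) i]
      have "compact (K' i)" unfolding K'_def using conjunct1[OF ki] cl by (rule compact_Int_closed)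
      moreover have "convex (K' i)" unfolding K'_def using conjunct1[OF conjunct2[OF ki]] cv by (rule convex_Int)
      moreover have "K' i \<subseteq> {x. \<forall>j. j \<notin> D \<longrightarrow> x$j = a'$j}"
      proof (intro subsetI CollectI allI impI)
        fix x j assume x: "x \<in> K' i" and j: "j \<notin> D"
        have xk: "x \<in> K i" "x$k = t" using x unfolding K'_def by auto
        have sub: "K i \<subseteq> {x. \<forall>j. j \<notin> insert k D \<longrightarrow> x$j = a$j}" by (rule conjunct2[OF conjunct2[OF ki]])
        show "x$j = a'$j"
        proof (cases "j = k")
          case True thus ?thesis using xk unfolding a'_def by simp
        next
          case False
          have "\<forall>j. j \<notin> insert k D \<longrightarrow> x$j = a$j" using subsetD[OF sub xk(1)] by simp
          hence "x$j = a$j" using False j by simp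
          thus ?thesis using False unfolding a'_def by simp
        qed
      qed
      ultimately show "compact (K' i) \<and> convex (K' i) \<and> K' i \<subseteq> {x. \<forall>j. j \<notin> D \<longrightarrow> x$j = a'$j}" by (intro conjI)
    qed
    have h2: "\<forall>x. (\<Sum>i\<in>I. c i * indicator (K' i) x) = 0"
    proof
      fix x
      have "(\<Sum>i\<in>I. c i * indicator (K' i) x) = (\<Sum>i\<in>I. c i * indicator (K i) x) * indicator {x. x$k = t} x"
        unfolding K'_def by (simp add: sum_distrib_right indicator_inter_arith mult.assoc)
      thus "(\<Sum>i\<in>I. c i * indicator (K' i) x) = 0" using insert.prems(3) by simp
    qed
    have "(\<Sum>i\<in>I. c i * (if K' i = {} then 0 else 1)) = 0"
      using insert.IH[OF insert.prems(1) h1 h2] .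
    moreover have "K' i = {} \<longleftrightarrow> t \<notin> (\<lambda>x. x$k) ` K i" for i unfolding K'_def by auto
    hence "\<And>i. (if K' i = {} then 0 else (1::real)) = (if t \<in> (\<lambda>x. x$k) ` K i then 1 else 0)" by simp
    ultimately show ?thesis by simp
  qed
  have "(\<Sum>i\<in>I. c i * (if (\<lambda>x. x$k) ` K i = {} then 0 else 1)) = 0"
  proof (rule one_dim[OF insert.prems(1)])
    show "\<forall>i\<in>I. compact ((\<lambda>x. x$k) ` K i) \<and> convex ((\<lambda>x. x$k) ` K i)"
    proof
      fix i assume i: "i \<in> I"
      have "compact ((\<lambda>x. x$k) ` K i)" using insert.prems(2) i
        by (intro compact_continuous_image continuous_intros) auto
      moreover have "convex ((\<lambda>x. x$k) ` K i)" using insert.prems(2) i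
        by (intro convex_linear_image) (auto simp add: bounded_linear.linear bounded_linear_vec_nth)
      ultimately show "compact ((\<lambda>x. x$k) ` K i) \<and> convex ((\<lambda>x. x$k) ` K i)" by blast
    qed
    show "\<forall>t. (\<Sum>i\<in>I. c i * (if t \<in> (\<lambda>x. x$k) ` K i then 1 else 0)) = 0" using slice by blast
  qed
  thus ?case by simp
qed

lemma euler:
  fixes K :: "'i \<Rightarrow> (real^'n::finite) set" and c :: "'i \<Rightarrow> real"
  assumes "finite I" "\<forall>i\<in>I. compact (K i) \<and> convex (K i)"
    "\<forall>x. (\<Sum>i\<in>I. c i * indicator (K i) x) = 0"
  shows "(\<Sum>i\<in>I. c i * (if K i = {} then 0 else 1)) = 0"
  using euler_aux[of UNIV I K 0 c] assms by auto


section \<open>Matroid facts\<close>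

lemma exch:
  assumes "is_matroid \<B>" "B1 \<in> \<B>" "B2 \<in> \<B>" "x \<in> B1 - B2"
  shows "\<exists>y\<in>B2 - B1. insert y (B1 - {x}) \<in> \<B>"
  using assms unfolding is_matroid_def by blast

lemma mrank_ge:
  fixes \<B> :: "'a::finite set set"
  assumes "B \<in> \<B>" shows "card (S \<inter> B) \<le> mrank \<B> S"
  unfolding mrank_def using assms by (intro Max_ge) auto

lemma mrank_ex:
  fixes \<B> :: "'a::finite set set"
  assumes "\<B> \<noteq> {}" shows "\<exists>B\<in>\<B>. card (S \<inter> B) = mrank \<B> S"
proof -
  have "mrank \<B> S \<in> (\<lambda>B. card (S \<inter> B)) ` \<B>" unfolding mrank_def using assms by (intro Max_in) auto
  thus ?thesis by auto
qed

lemma mrank_le_card: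
  fixes \<B> :: "'a::finite set set"
  assumes "\<B> \<noteq> {}" shows "mrank \<B> S \<le> CARD('a)"
proof -
  obtain B where "B \<in> \<B>" "card (S \<inter> B) = mrank \<B> S" using mrank_ex[OF assms] by blast
  moreover have "card (S \<inter> B) \<le> CARD('a)" by (rule card_mono) auto
  ultimately show ?thesis by simp
qed

lemma bases_card:
  fixes \<B> :: "'a::finite set set"
  assumes M: "is_matroid \<B>"
  shows "B1 \<in> \<B> \<Longrightarrow> B2 \<in> \<B> \<Longrightarrow> card B1 = card B2"
proof (induction "card (B1 - B2)" arbitrary: B1 rule: less_induct)
  case less
  show ?case
  proof (cases "B1 - B2 = {}")
    case True
    have "B2 - B1 = {}"
    proof (rule ccontr)
      assume "B2 - B1 \<noteq> {}" then obtain x where x: "x \<in> B2 - B1" by auto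
      obtain y where "y \<in> B1 - B2" using exch[OF M less.prems(2) less.prems(1) x] by blast
      thus False using True by auto
    qed
    hence "B1 = B2" using True by auto
    thus ?thesis by simp
  next
    case False
    then obtain x where x: "x \<in> B1 - B2" by auto
    obtain y where y: "y \<in> B2 - B1" "insert y (B1 - {x}) \<in> \<B>"
      using exch[OF M less.prems(1) less.prems(2) x] by blast
    define B where "B = insert y (B1 - {x})"
    have "B - B2 = (B1 - B2) - {x}" using x y unfolding B_def by auto
    moreover have "card (B1 - B2) > 0" using x by (auto simp: card_gt_0_iff)
    ultimately have lt: "card (B - B2) < card (B1 - B2)" using x by simp
    have "card B = card B1" unfolding B_def using x y
      by (simp add: card_insert_disjoint card_Diff_singleton card_gt_0_iff) (metis card_gt_0_iff empty_iff finite Diff_iff Suc_pred)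
    moreover have "card B = card B2" using less.hyps[OF lt] y(2) less.prems(2) unfolding B_def by blast
    ultimately show ?thesis by simp
  qed
qed

lemma reduce:
  fixes \<B> :: "'a::finite set set"
  assumes M: "is_matroid \<B>" and B: "B \<in> \<B>"
  shows "B' \<in> \<B> \<Longrightarrow> card (T \<inter> B) < card (T \<inter> B') \<Longrightarrow> \<exists>B''\<in>\<B>. B'' - B \<subseteq> T \<and> card (T \<inter> B) < card (T \<inter> B'')"
proof (induction "card (B' - B)" arbitrary: B' rule: less_induct)
  case less
  show ?case
  proof (cases "B' - B \<subseteq> T")
    case True thus ?thesis using less.prems by blast
  next
    case False
    then obtain x where x: "x \<in> B' - B" "x \<notin> T" by auto
    obtain y where y: "y \<in> B - B'" "insert y (B' - {x}) \<in> \<B>"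
      using exch[OF M less.prems(1) B x(1)] by blast
    define B2 where "B2 = insert y (B' - {x})"
    have "B2 - B = (B' - B) - {x}" using x y unfolding B2_def by auto
    moreover have "card (B' - B) > 0" using x by (auto simp: card_gt_0_iff)
    ultimately have lt: "card (B2 - B) < card (B' - B)" using x by simp
    have "T \<inter> B' \<subseteq> T \<inter> B2" using x unfolding B2_def by auto
    hence "card (T \<inter> B') \<le> card (T \<inter> B2)" by (intro card_mono) auto
    hence "card (T \<inter> B) < card (T \<inter> B2)" using less.prems(2) by simp
    thus ?thesis using less.hyps[OF lt] y(2) unfolding B2_def by blast
  qed
qed

lemma improve:
  fixes \<B> :: "'a::finite set set" and S :: "nat \<Rightarrow> 'a set"
  assumes M: "is_matroid \<B>" and mono: "\<And>i j. i \<le> j \<Longrightarrow> S i \<subseteq> S j"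
    and B: "B \<in> \<B>" and good: "\<forall>i<m. card (S i \<inter> B) = mrank \<B> (S i)"
    and lt: "card (S m \<inter> B) < mrank \<B> (S m)"
  shows "\<exists>B3\<in>\<B>. (\<forall>i<m. card (S i \<inter> B3) = mrank \<B> (S i)) \<and> card (S m \<inter> B) < card (S m \<inter> B3)"
proof -
  define T where "T = S m"
  have ne: "\<B> \<noteq> {}" using B by auto
  obtain B' where B': "B' \<in> \<B>" "card (T \<inter> B') = mrank \<B> T" using mrank_ex[OF ne] by blast
  have "card (T \<inter> B) < card (T \<inter> B')" using B'(2) lt unfolding T_def by simp
  then obtain B'' where B'': "B'' \<in> \<B>" "B'' - B \<subseteq> T" "card (T \<inter> B) < card (T \<inter> B'')"
    using reduce[OF M B B'(1)] by blast
  have "\<exists>z\<in>B - B''. z \<notin> T"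
  proof (rule ccontr)
    assume "\<not> (\<exists>z\<in>B - B''. z \<notin> T)"
    hence sub: "B - B'' \<subseteq> T" by auto
    have cB: "card B = card B''" using bases_card[OF M B B''(1)] .
    have e1: "T \<inter> B'' = (T \<inter> B'' \<inter> B) \<union> (B'' - B)" using B''(2) by auto
    have e2: "T \<inter> B = (T \<inter> B'' \<inter> B) \<union> (B - B'')" using sub by auto
    have c1: "card (T \<inter> B'') = card (T \<inter> B'' \<inter> B) + card (B'' - B)"
      by (subst e1, rule card_Un_disjoint) auto
    have c2: "card (T \<inter> B) = card (T \<inter> B'' \<inter> B) + card (B - B'')"
      by (subst e2, rule card_Un_disjoint) auto
    have "card (B'' - B) = card (B - B'')"
      using cB by (simp add: card_Diff_subset_Int Int_commute)
    thus False using c1 c2 B''(3) by simp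
  qed
  then obtain z where z: "z \<in> B - B''" "z \<notin> T" by blast
  obtain y where y: "y \<in> B'' - B" "insert y (B - {z}) \<in> \<B>" using exch[OF M B B''(1) z(1)] by blast
  define B3 where "B3 = insert y (B - {z})"
  have yT: "y \<in> T" using y B''(2) by auto
  have g3: "\<forall>i<m. card (S i \<inter> B3) = mrank \<B> (S i)"
  proof (intro allI impI)
    fix i assume i: "i < m"
    have "S i \<subseteq> T" using mono[of i m] i unfolding T_def by simp
    hence "S i \<inter> B \<subseteq> S i \<inter> B3" using z unfolding B3_def by auto
    hence "card (S i \<inter> B) \<le> card (S i \<inter> B3)" by (intro card_mono) auto
    moreover have "card (S i \<inter> B3) \<le> mrank \<B> (S i)" using mrank_ge y(2) unfolding B3_def by blast
    ultimately show "card (S i \<inter> B3) = mrank \<B> (S i)" using good i by simp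
  qed
  have "T \<inter> B3 = insert y (T \<inter> B)" using z yT unfolding B3_def by auto
  hence "card (T \<inter> B3) = Suc (card (T \<inter> B))" using y(1) by (simp add: card_insert_disjoint)
  thus ?thesis using g3 y(2) unfolding B3_def T_def by auto
qed

lemma fixup:
  fixes \<B> :: "'a::finite set set" and S :: "nat \<Rightarrow> 'a set"
  assumes M: "is_matroid \<B>" and mono: "\<And>i j. i \<le> j \<Longrightarrow> S i \<subseteq> S j"
  shows "B \<in> \<B> \<Longrightarrow> \<forall>i<m. card (S i \<inter> B) = mrank \<B> (S i) \<Longrightarrow> \<exists>B'\<in>\<B>. \<forall>i\<le>m. card (S i \<inter> B') = mrank \<B> (S i)"
proof (induction "mrank \<B> (S m) - card (S m \<inter> B)" arbitrary: B rule: less_induct)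
  case less
  show ?case
  proof (cases "card (S m \<inter> B) < mrank \<B> (S m)")
    case False
    hence "card (S m \<inter> B) = mrank \<B> (S m)" using mrank_ge[OF less.prems(1)] by (meson le_antisym not_less)
    have "\<forall>i\<le>m. card (S i \<inter> B) = mrank \<B> (S i)"
    proof (intro allI impI)
      fix i assume "i \<le> m"
      hence "i < m \<or> i = m" by auto
      thus "card (S i \<inter> B) = mrank \<B> (S i)" using less.prems(2) \<open>card (S m \<inter> B) = mrank \<B> (S m)\<close> by auto
    qed
    thus ?thesis using less.prems(1) by blast
  next
    case True
    obtain B3 where B3: "B3 \<in> \<B>" "\<forall>i<m. card (S i \<inter> B3) = mrank \<B> (S i)" "card (S m \<inter> B) < card (S m \<inter> B3)"
      using improve[OF M mono less.prems(1) less.prems(2) True] by blast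
    have "card (S m \<inter> B3) \<le> mrank \<B> (S m)" using mrank_ge[OF B3(1)] .
    hence "mrank \<B> (S m) - card (S m \<inter> B3) < mrank \<B> (S m) - card (S m \<inter> B)" using B3(3) True by simp
    from less.hyps[OF this B3(1) B3(2)] show ?thesis .
  qed
qed

lemma chain:
  fixes \<B> :: "'a::finite set set" and S :: "nat \<Rightarrow> 'a set"
  assumes M: "is_matroid \<B>" and mono: "\<And>i j. i \<le> j \<Longrightarrow> S i \<subseteq> S j"
  shows "\<exists>B\<in>\<B>. \<forall>i\<le>m. card (S i \<inter> B) = mrank \<B> (S i)"
proof (induction m)
  case 0
  obtain B where B: "B \<in> \<B>" using M unfolding is_matroid_def by auto
  have "\<forall>i<(0::nat). card (S i \<inter> B) = mrank \<B> (S i)" by simp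
  from fixup[OF M mono B this] show ?case .
next
  case (Suc m)
  then obtain B where B: "B \<in> \<B>" and g: "\<forall>i\<le>m. card (S i \<inter> B) = mrank \<B> (S i)" by (elim bexE)
  have g': "\<forall>i<Suc m. card (S i \<inter> B) = mrank \<B> (S i)" using g by (simp add: less_Suc_eq_le)
  from fixup[OF M mono B g'] show ?case .
qed


section \<open>Euler characteristic functional on lists of compact convex sets\<close>

definition evl :: "(real \<times> (real^'n::finite) set) list \<Rightarrow> real^'n \<Rightarrow> real" where
  "evl xs x = sum_list (map (\<lambda>(c,K). c * indicator K x) xs)"

definition nel :: "(real \<times> (real^'n::finite) set) list \<Rightarrow> real" where
  "nel xs = sum_list (map (\<lambda>(c,K). c * (if K = {} then 0 else 1)) xs)"

definition ccl :: "(real \<times> (real^'n::finite) set) list \<Rightarrow> bool" where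
  "ccl xs \<longleftrightarrow> (\<forall>p\<in>set xs. compact (snd p) \<and> convex (snd p))"

definition chi :: "(real^'n::finite \<Rightarrow> real) \<Rightarrow> real" where
  "chi f = (SOME v. \<exists>xs. ccl xs \<and> f = evl xs \<and> v = nel xs)"

lemma sum_list_map_nth: "sum_list (map f xs) = (\<Sum>i\<in>{0..<length xs}. f (xs ! i))"
  by (simp add: sum_list_sum_nth)

lemma euler_list:
  assumes "ccl xs" "\<forall>x. evl xs x = 0" shows "nel xs = 0"
proof -
  have "(\<Sum>i\<in>{0..<length xs}. fst (xs!i) * (if snd (xs!i) = {} then 0 else 1)) = 0"
  proof (rule euler)
    show "finite {0..<length xs}" by simp
    show "\<forall>i\<in>{0..<length xs}. compact (snd (xs!i)) \<and> convex (snd (xs!i))"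
      using assms(1) unfolding ccl_def by auto
    show "\<forall>x. (\<Sum>i\<in>{0..<length xs}. fst (xs!i) * indicator (snd (xs!i)) x) = 0"
    proof
      fix x
      have "evl xs x = (\<Sum>i\<in>{0..<length xs}. fst (xs!i) * indicator (snd (xs!i)) x)"
        unfolding evl_def sum_list_map_nth by (simp add: case_prod_beta)
      thus "(\<Sum>i\<in>{0..<length xs}. fst (xs!i) * indicator (snd (xs!i)) x) = 0" using assms(2) by simp
    qed
  qed
  moreover have "nel xs = (\<Sum>i\<in>{0..<length xs}. fst (xs!i) * (if snd (xs!i) = {} then 0 else 1))"
    unfolding nel_def sum_list_map_nth by (simp add: case_prod_beta)
  ultimately show ?thesis by simp
qed

definition negl :: "(real \<times> (real^'n::finite) set) list \<Rightarrow> (real \<times> (real^'n::finite) set) list" where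
  "negl xs = map (\<lambda>(c,K). (-c, K)) xs"
definition scl :: "real \<Rightarrow> (real \<times> (real^'n::finite) set) list \<Rightarrow> (real \<times> (real^'n::finite) set) list" where
  "scl a xs = map (\<lambda>(c,K). (a*c, K)) xs"
definition rsl :: "(real^'n::finite) set \<Rightarrow> (real \<times> (real^'n::finite) set) list \<Rightarrow> (real \<times> (real^'n::finite) set) list" where
  "rsl H xs = map (\<lambda>(c,K). (c, K \<inter> H)) xs"

lemma evl_append: "evl (xs @ ys) x = evl xs x + evl ys x" by (simp add: evl_def)
lemma nel_append: "nel (xs @ ys) = nel xs + nel ys" by (simp add: nel_def)
lemma evl_negl: "evl (negl xs) x = - evl xs x" by (induction xs) (auto simp: evl_def negl_def)
lemma nel_negl: "nel (negl xs) = - nel xs" by (induction xs) (auto simp: nel_def negl_def)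
lemma evl_scl: "evl (scl a xs) x = a * evl xs x" by (induction xs) (auto simp: evl_def scl_def algebra_simps)
lemma nel_scl: "nel (scl a xs) = a * nel xs" by (induction xs) (auto simp: nel_def scl_def algebra_simps)
lemma evl_rsl: "evl (rsl H xs) x = evl xs x * indicator H x"
  by (induction xs) (auto simp: evl_def rsl_def algebra_simps indicator_inter_arith)
lemma ccl_append: "ccl (xs @ ys) \<longleftrightarrow> ccl xs \<and> ccl ys" by (auto simp: ccl_def)
lemma ccl_negl: "ccl xs \<Longrightarrow> ccl (negl xs)" by (auto simp: ccl_def negl_def)
lemma ccl_scl: "ccl xs \<Longrightarrow> ccl (scl a xs)" by (auto simp: ccl_def scl_def)
lemma ccl_rsl: "ccl xs \<Longrightarrow> closed H \<Longrightarrow> convex H \<Longrightarrow> ccl (rsl H xs)"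
  unfolding ccl_def rsl_def
proof (intro ballI)
  fix p assume a: "\<forall>p\<in>set xs. compact (snd p) \<and> convex (snd p)" "closed H" "convex H"
    and p: "p \<in> set (map (\<lambda>(c, K). (c, K \<inter> H)) xs)"
  then obtain q where q: "q \<in> set xs" "p = (fst q, snd q \<inter> H)" by (auto simp: case_prod_beta)
  have "compact (snd q)" "convex (snd q)" using a(1) q(1) by auto
  thus "compact (snd p) \<and> convex (snd p)" using q(2) a(2,3) compact_Int_closed convex_Int by auto
qed

lemma chi_eq:
  assumes "ccl xs" shows "chi (evl xs) = nel xs"
proof -
  let ?P = "\<lambda>v. \<exists>ys. ccl ys \<and> evl xs = evl ys \<and> v = nel ys"
  have "?P (nel xs)" using assms by blast
  hence "?P (chi (evl xs))" unfolding chi_def by (rule someI)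
  then obtain ys where ys: "ccl ys" "evl xs = evl ys" "chi (evl xs) = nel ys" by blast
  have "nel (xs @ negl ys) = 0"
  proof (rule euler_list)
    show "ccl (xs @ negl ys)" using assms ys(1) by (simp add: ccl_append ccl_negl)
    show "\<forall>x. evl (xs @ negl ys) x = 0" using ys(2) by (simp add: evl_append evl_negl)
  qed
  thus ?thesis using ys(3) by (simp add: nel_append nel_negl)
qed

lemma chi_rsl:
  assumes "ccl xs" "closed H" "convex H"
  shows "chi (\<lambda>x. evl xs x * indicator H x) = nel (rsl H xs)"
proof -
  have "(\<lambda>x. evl xs x * indicator H x) = evl (rsl H xs)" by (simp add: evl_rsl fun_eq_iff)
  thus ?thesis using chi_eq[OF ccl_rsl[OF assms]] by simp
qed


section \<open>Weights and encodings\<close>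

definition wvec :: "'a::finite list \<Rightarrow> real^'a" where
  "wvec l = (\<chi> j. \<Sum>i<Suc CARD('a). real (Suc CARD('a) ^ i) * (if j \<in> set (take i l) then 1 else 0))"

definition wvn :: "'a::finite list \<Rightarrow> 'a set \<Rightarrow> nat" where
  "wvn l B = (\<Sum>i<Suc CARD('a). Suc CARD('a) ^ i * card (set (take i l) \<inter> B))"

definition enc :: "nat \<Rightarrow> nat list \<Rightarrow> nat" where
  "enc N r = (\<Sum>i<length r. N ^ i * r ! i)"

definition Hs :: "'a::finite list \<Rightarrow> nat \<Rightarrow> (real^'a) set" where
  "Hs l c = {x. real c \<le> wvec l \<bullet> x}"

definition Rvec :: "'a::finite set set \<Rightarrow> 'a list \<Rightarrow> nat list" where
  "Rvec \<B> l = map (\<lambda>i. mrank \<B> (set (take i l))) [0..<Suc CARD('a)]"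

definition jump :: "nat list \<Rightarrow> nat list" where
  "jump r = map (\<lambda>i. r ! (Suc i) - r ! i) [0..<length r - 1]"

lemma sum_card_real: "(\<Sum>j\<in>(UNIV::'n::finite set). if j \<in> A then 1 else 0) = real (card A)"
  by (simp add: sum.If_cases)

lemma wvec_ind: "wvec l \<bullet> ind_vec B = real (wvn l B)"
proof -
  let ?N = "Suc CARD('a)"
  have "wvec l \<bullet> ind_vec B = (\<Sum>j\<in>UNIV. (\<Sum>i<?N. real (?N ^ i) * (if j \<in> set (take i l) then 1 else 0)) * (if j \<in> B then 1 else 0))"
    unfolding inner_vec_def wvec_def ind_vec_def by simp
  also have "\<dots> = (\<Sum>j\<in>UNIV. \<Sum>i<?N. real (?N ^ i) * (if j \<in> set (take i l) \<inter> B then 1 else 0))"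
    by (intro sum.cong refl) (auto simp: sum_distrib_right)
  also have "\<dots> = (\<Sum>i<?N. \<Sum>j\<in>UNIV. real (?N ^ i) * (if j \<in> set (take i l) \<inter> B then 1 else 0))"
    by (rule sum.swap)
  also have "\<dots> = (\<Sum>i<?N. real (?N ^ i) * real (card (set (take i l) \<inter> B)))"
    by (intro sum.cong refl) (simp only: sum_distrib_left[symmetric] sum_card_real)
  also have "\<dots> = real (wvn l B)" unfolding wvn_def by simp
  finally show ?thesis .
qed

lemma enc_Rvec: "enc (Suc CARD('a)) (Rvec \<B> l) = (\<Sum>i<Suc CARD('a). Suc CARD('a) ^ i * mrank \<B> (set (take i (l::'a::finite list))))"
  unfolding enc_def Rvec_def by (intro sum.cong) (auto simp del: upt_Suc)

lemma wvn_le: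
  fixes \<B> :: "'a::finite set set"
  assumes "B \<in> \<B>" shows "wvn l B \<le> enc (Suc CARD('a)) (Rvec \<B> l)"
  unfolding enc_Rvec wvn_def
proof (rule sum_mono)
  fix i show "Suc CARD('a) ^ i * card (set (take i l) \<inter> B) \<le> Suc CARD('a) ^ i * mrank \<B> (set (take i l))"
    using mrank_ge[OF assms] by (rule mult_le_mono2)
qed

lemma chain_take:
  fixes \<B> :: "'a::finite set set"
  assumes M: "is_matroid \<B>"
  shows "\<exists>B\<in>\<B>. \<forall>i\<le>m. card (set (take i l) \<inter> B) = mrank \<B> (set (take i l))"
  apply (rule chain[where S="\<lambda>i. set (take i l)"])
   apply (rule M)
  apply (erule set_take_subset_set_take)
  done

lemma wvn_max:
  fixes \<B> :: "'a::finite set set"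
  assumes M: "is_matroid \<B>" shows "\<exists>B\<in>\<B>. wvn l B = enc (Suc CARD('a)) (Rvec \<B> l)"
proof -
  obtain B where B: "B \<in> \<B>" "\<forall>i\<le>CARD('a). card (set (take i l) \<inter> B) = mrank \<B> (set (take i l))"
    using chain_take[OF M, where m="CARD('a)" and l=l] by (elim bexE) simp
  have "wvn l B = enc (Suc CARD('a)) (Rvec \<B> l)"
    unfolding enc_Rvec wvn_def using B(2) by (intro sum.cong refl) (simp add: less_Suc_eq_le)
  thus ?thesis using B(1) by blast
qed

lemma mp_compact: "compact (matroid_polytope (\<B> :: 'a::finite set set))"
  unfolding matroid_polytope_def by (intro compact_convex_hull finite_imp_compact) auto

lemma mp_convex: "convex (matroid_polytope \<B>)"
  unfolding matroid_polytope_def by simp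

lemma Hs_closed: "closed (Hs l c)" unfolding Hs_def by (rule closed_halfspace_ge)
lemma Hs_convex: "convex (Hs l c)" unfolding Hs_def by (rule convex_halfspace_ge)

lemma nonempty_iff:
  fixes \<B> :: "'a::finite set set"
  assumes M: "is_matroid \<B>"
  shows "(matroid_polytope \<B> \<inter> Hs l c \<noteq> {}) \<longleftrightarrow> c \<le> enc (Suc CARD('a)) (Rvec \<B> l)"
proof
  assume ne: "matroid_polytope \<B> \<inter> Hs l c \<noteq> {}"
  show "c \<le> enc (Suc CARD('a)) (Rvec \<B> l)"
  proof (rule ccontr)
    assume "\<not> c \<le> enc (Suc CARD('a)) (Rvec \<B> l)"
    hence lt: "enc (Suc CARD('a)) (Rvec \<B> l) < c" by simp
    have "ind_vec ` \<B> \<subseteq> {x. wvec l \<bullet> x < real c}"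
    proof
      fix y assume "y \<in> ind_vec ` \<B>"
      then obtain B where B: "B \<in> \<B>" "y = ind_vec B" by auto
      have "wvn l B < c" using wvn_le[OF B(1), where l=l] lt by simp
      thus "y \<in> {x. wvec l \<bullet> x < real c}" using B(2) by (simp add: wvec_ind)
    qed
    hence "matroid_polytope \<B> \<subseteq> {x. wvec l \<bullet> x < real c}"
      unfolding matroid_polytope_def by (intro hull_minimal convex_halfspace_lt)
    thus False using ne unfolding Hs_def by auto
  qed
next
  assume le: "c \<le> enc (Suc CARD('a)) (Rvec \<B> l)"
  obtain B where B: "B \<in> \<B>" "wvn l B = enc (Suc CARD('a)) (Rvec \<B> l)" using wvn_max[OF M] by blast
  have "ind_vec B \<in> matroid_polytope \<B>" unfolding matroid_polytope_def using B(1) by (intro hull_inc) auto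
  moreover have "ind_vec B \<in> Hs l c" unfolding Hs_def using wvec_ind[of l B] B(2) le by simp
  ultimately show "matroid_polytope \<B> \<inter> Hs l c \<noteq> {}" by blast
qed

lemma enc_Cons: "enc N (a # r) = a + N * enc N r"
  unfolding enc_def by (simp only: length_Cons sum.lessThan_Suc_shift) (simp add: sum_distrib_left algebra_simps)

lemma enc_inj:
  "length r = length s \<Longrightarrow> set r \<subseteq> {..<N} \<Longrightarrow> set s \<subseteq> {..<N} \<Longrightarrow> enc N r = enc N s \<Longrightarrow> r = s"
proof (induction r arbitrary: s)
  case Nil thus ?case by simp
next
  case (Cons a r)
  then obtain b s' where s: "s = b # s'" by (cases s) auto
  have ab: "a < N" "b < N" using Cons.prems s by auto
  have e: "a + N * enc N r = b + N * enc N s'" using Cons.prems(4) s by (simp add: enc_Cons)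
  have "a = b" using e ab by (metis mod_mult_self2 mod_less)
  moreover have "enc N r = enc N s'" using e ab \<open>a = b\<close> by simp
  ultimately show ?case using Cons.IH[of s'] Cons.prems s by auto
qed

lemma lo_length: "l \<in> linear_orders \<Longrightarrow> length (l::'a::finite list) = CARD('a)"
  unfolding linear_orders_def using distinct_card by fastforce

lemma jump_Rvec:
  assumes "l \<in> linear_orders" shows "jump (Rvec \<B> l) = rkjump \<B> l"
  unfolding jump_def Rvec_def rkjump_def lo_length[OF assms]
  by (intro map_cong) (auto simp del: upt_Suc)

lemma Rvec_in: "is_matroid \<B> \<Longrightarrow> Rvec \<B> (l::'a::finite list) \<in> {r. set r \<subseteq> {..<Suc CARD('a)} \<and> length r = Suc CARD('a)}"
  unfolding Rvec_def is_matroid_def using mrank_le_card[of \<B>] by (auto simp del: upt_Suc simp: less_Suc_eq_le)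


lemma Const_add: "Const (a + b) = Const a + Const b" by (simp add: Const_def single_add)
lemma Const_mult: "Const (a * b) = Const a * Const b" by (simp add: Const_def mult_single)
lemma Const_0: "Const 0 = 0" by (simp add: Const_def)
lemma Const_1: "Const 1 = 1" by (simp add: Const_def)

lemma rsl_append: "rsl H (xs @ ys) = rsl H xs @ rsl H ys" by (simp add: rsl_def)
lemma rsl_scl: "rsl H (scl a xs) = scl a (rsl H xs)" by (induction xs) (auto simp: rsl_def scl_def)

lemma fspan_rep:
  fixes f :: "real^'a::finite \<Rightarrow> real"
  assumes "f \<in> fspan {indicator (matroid_polytope \<B>) | \<B> :: 'a set set. is_matroid \<B>}"
  shows "\<exists>xs. ccl xs \<and> f = evl xs"
proof -
  obtain F c where F: "finite F" "F \<subseteq> {indicator (matroid_polytope \<B>) | \<B> :: 'a set set. is_matroid \<B>}"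
    "f = (\<lambda>x. \<Sum>g\<in>F. c g * g x)"
    using assms unfolding fspan_def by blast
  obtain gs where gs: "distinct gs" "set gs = F" using finite_distinct_list[OF F(1)] by blast
  have "\<forall>g\<in>F. \<exists>K. g = indicator K \<and> compact K \<and> convex K"
  proof
    fix g assume "g \<in> F"
    then obtain \<B> :: "'a set set" where "g = indicator (matroid_polytope \<B>)" using F(2) by blast
    thus "\<exists>K. g = indicator K \<and> compact K \<and> convex K" using mp_compact mp_convex by blast
  qed
  then obtain Kf where Kf: "\<forall>g\<in>F. g = indicator (Kf g) \<and> compact (Kf g) \<and> convex (Kf g)"
    by metis
  define xs where "xs = map (\<lambda>g. (c g, Kf g)) gs"
  have "ccl xs" unfolding ccl_def xs_def using Kf gs(2) by auto
  moreover have "f = evl xs"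
  proof
    fix x
    have "evl xs x = sum_list (map (\<lambda>g. c g * indicator (Kf g) x) gs)"
      unfolding evl_def xs_def by (simp add: comp_def)
    also have "\<dots> = (\<Sum>g\<in>F. c g * indicator (Kf g) x)" using gs by (simp add: sum_list_distinct_conv_sum_set)
    also have "\<dots> = (\<Sum>g\<in>F. c g * g x)" using Kf by (intro sum.cong refl) metis
    finally show "f x = evl xs x" using F(3) by simp
  qed
  ultimately show ?thesis by blast
qed

lemma ne_real: "nel (rsl H [(1, P)]) = (if P \<inter> H = {} then 0 else 1)"
  by (simp add: nel_def rsl_def)

theorem theorem7p9:
  "\<exists>Ghat :: ((real ^ 'a::finite) \<Rightarrow> real) \<Rightarrow> nat list mpoly.
     linear_on_fspan (fspan {indicator (matroid_polytope \<B>) | \<B> :: 'a set set. is_matroid \<B>}) Ghat \<and>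
     (\<forall>\<B> :: 'a set set. is_matroid \<B> \<longrightarrow> G \<B> = Ghat (indicator (matroid_polytope \<B>)))"
proof -
  define N where "N = Suc CARD('a)"
  define Rs where "Rs = {r. set r \<subseteq> {..<N} \<and> length r = N}"
  define Gh :: "((real^'a) \<Rightarrow> real) \<Rightarrow> nat list mpoly" where
    "Gh f = (\<Sum>l\<in>linear_orders. \<Sum>r\<in>Rs. Const (chi (\<lambda>x. f x * indicator (Hs l (enc N r)) x)
        - chi (\<lambda>x. f x * indicator (Hs l (enc N r + 1)) x)) * Var (jump r))" for f
  define cf :: "(real \<times> (real^'a) set) list \<Rightarrow> 'a list \<Rightarrow> nat list \<Rightarrow> real" where
    "cf xs l r = nel (rsl (Hs l (enc N r)) xs) - nel (rsl (Hs l (enc N r + 1)) xs)" for xs l r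
  have finRs: "finite Rs" unfolding Rs_def by (rule finite_lists_length_eq) simp
  have Gh_evl: "Gh (evl xs) = (\<Sum>l\<in>linear_orders. \<Sum>r\<in>Rs. Const (cf xs l r) * Var (jump r))"
    if "ccl xs" for xs
    unfolding Gh_def cf_def using chi_rsl[OF that Hs_closed Hs_convex] by simp
  let ?V = "fspan {indicator (matroid_polytope \<B>) | \<B> :: 'a set set. is_matroid \<B>}"
  have lin: "linear_on_fspan ?V Gh"
    unfolding linear_on_fspan_def
  proof (intro conjI ballI allI)
    fix f g assume f: "f \<in> ?V" and g: "g \<in> ?V"
    obtain xs where xs: "ccl xs" "f = evl xs" using fspan_rep[OF f] by blast
    obtain ys where ys: "ccl ys" "g = evl ys" using fspan_rep[OF g] by blast
    have e: "(\<lambda>x. f x + g x) = evl (xs @ ys)" using xs ys by (simp add: fun_eq_iff evl_append)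
    have c: "cf (xs @ ys) l r = cf xs l r + cf ys l r" for l r
      unfolding cf_def by (simp add: rsl_append nel_append)
    have "Gh (\<lambda>x. f x + g x) = (\<Sum>l\<in>linear_orders. \<Sum>r\<in>Rs. Const (cf xs l r + cf ys l r) * Var (jump r))"
      using e Gh_evl[of "xs @ ys"] xs(1) ys(1) c by (simp add: ccl_append)
    also have "\<dots> = (\<Sum>l\<in>linear_orders. \<Sum>r\<in>Rs. Const (cf xs l r) * Var (jump r))
        + (\<Sum>l\<in>linear_orders. \<Sum>r\<in>Rs. Const (cf ys l r) * Var (jump r))"
      by (simp add: Const_add distrib_right sum.distrib)
    also have "\<dots> = Gh f + Gh g" using Gh_evl xs ys by simp
    finally show "Gh (\<lambda>x. f x + g x) = Gh f + Gh g" .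
  next
    fix a :: real and f assume f: "f \<in> ?V"
    obtain xs where xs: "ccl xs" "f = evl xs" using fspan_rep[OF f] by blast
    have e: "(\<lambda>x. a * f x) = evl (scl a xs)" using xs by (simp add: fun_eq_iff evl_scl)
    have c: "cf (scl a xs) l r = a * cf xs l r" for l r
      unfolding cf_def by (simp add: rsl_scl nel_scl right_diff_distrib)
    have "Gh (\<lambda>x. a * f x) = (\<Sum>l\<in>linear_orders. \<Sum>r\<in>Rs. Const (a * cf xs l r) * Var (jump r))"
      using e Gh_evl[of "scl a xs"] ccl_scl[OF xs(1)] c by simp
    also have "\<dots> = Const a * (\<Sum>l\<in>linear_orders. \<Sum>r\<in>Rs. Const (cf xs l r) * Var (jump r))"
      by (simp add: Const_mult sum_distrib_left mult.assoc)
    also have "\<dots> = Const a * Gh f" using Gh_evl xs by simp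
    finally show "Gh (\<lambda>x. a * f x) = Const a * Gh f" .
  qed
  have gval: "G \<B> = Gh (indicator (matroid_polytope \<B>))" if M: "is_matroid \<B>" for \<B> :: "'a set set"
  proof -
    define P where "P = matroid_polytope \<B>"
    have ccP: "ccl [(1, P)]" unfolding ccl_def P_def using mp_compact mp_convex by auto
    have eP: "indicator P = evl [(1, P)]" by (simp add: fun_eq_iff evl_def)
    have cfv: "cf [(1, P)] l r = (if r = Rvec \<B> l then 1 else 0)" if r: "r \<in> Rs" for l r
    proof -
      have R: "Rvec \<B> l \<in> Rs" using Rvec_in[OF M] unfolding Rs_def N_def by simp
      have "cf [(1, P)] l r = (if enc N r \<le> enc N (Rvec \<B> l) then 1 else 0)
          - (if enc N r + 1 \<le> enc N (Rvec \<B> l) then 1 else 0)"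
      proof -
        have h1: "(P \<inter> Hs l (enc N r) = {}) \<longleftrightarrow> \<not> (enc N r \<le> enc N (Rvec \<B> l))"
          using nonempty_iff[OF M, of l "enc N r"] unfolding P_def N_def by blast
        have h2: "(P \<inter> Hs l (enc N r + 1) = {}) \<longleftrightarrow> \<not> (enc N r + 1 \<le> enc N (Rvec \<B> l))"
          using nonempty_iff[OF M, of l "enc N r + 1"] unfolding P_def N_def by blast
        show ?thesis unfolding cf_def ne_real h1 h2 by simp
      qed
      also have "\<dots> = (if enc N r = enc N (Rvec \<B> l) then 1 else 0)" by auto
      also have "\<dots> = (if r = Rvec \<B> l then 1 else 0)"
      proof -
        have "enc N r = enc N (Rvec \<B> l) \<longleftrightarrow> r = Rvec \<B> l"
          using enc_inj[of r "Rvec \<B> l" N] r R unfolding Rs_def by auto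
        thus ?thesis by simp
      qed
      finally show ?thesis .
    qed
    have "Gh (indicator P) = (\<Sum>l\<in>linear_orders. \<Sum>r\<in>Rs. Const (cf [(1, P)] l r) * Var (jump r))"
      using Gh_evl[OF ccP] eP by simp
    also have "\<dots> = (\<Sum>l\<in>linear_orders. \<Sum>r\<in>Rs. if r = Rvec \<B> l then Var (jump r) else 0)"
      using cfv by (intro sum.cong refl) (simp add: Const_0 Const_1)
    also have "\<dots> = (\<Sum>l\<in>linear_orders. Var (jump (Rvec \<B> l)))"
    proof (intro sum.cong refl)
      fix l
      have R: "Rvec \<B> l \<in> Rs" using Rvec_in[OF M] unfolding Rs_def N_def by simp
      show "(\<Sum>r\<in>Rs. if r = Rvec \<B> l then Var (jump r) else 0) = Var (jump (Rvec \<B> l))"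
        using finRs R by (simp add: sum.delta')
    qed
    also have "\<dots> = (\<Sum>l\<in>linear_orders. Var (rkjump \<B> l))"
      by (intro sum.cong refl) (simp add: jump_Rvec)
    also have "\<dots> = G \<B>" unfolding G_def ..
    finally show ?thesis unfolding P_def by simp
  qed
  show ?thesis using lin gval by blast
qed

end
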